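(* Let $\mathcal{L}$ be a language with semantic structure $\mathcal{S}=(\Sigma,I)$, and assume $\mathcal{L}$ is closed under infinite logical conjunction. Let $\mathcal{S}^\sharp=(\mathrm{AD}_{\mathcal{L}},I^\sharp)$ be an abstract semantic structure on $\mathrm{AD}_{\mathcal{L}}$. If $[\![\cdot]\!]_{\mathcal{S}^\sharp}$ is strongly preserving for $\mathcal{L}$, then $I^\sharp=I^{\mathrm{AD}_{\mathcal{L}}}$.
   Context: A language $\mathcal{L}$ has formulae $\varphi::=p\mid f(\varphi_1,\dots,\varphi_n)$, $p$ in a set $AP$ of atoms, $f$ in a finite set $Op$ of operators of arity $\ge1$. A semantic structure $\mathcal{S}=(\Sigma,I)$ gives $\mathbf{p}=I(p)\subseteq\Sigma$ and $\mathbf{f}=I(f):\wp(\Sigma)^{n}\to\wp(\Sigma)$, with $[\![p]\!]_{\mathcal{S}}=\mathbf{p}$, $[\![f(\varphi_1,..)]\!]_{\mathcal{S}}=\mathbf{f}([\![\varphi_1]\!]_{\mathcal{S}},..)$. $\mathcal{L}$ is closed under infinite logical conjunction if for every $\Phi\subseteq\mathcal{L}$ (including $\Phi=\varnothing$) there is $\psi\in\mathcal{L}$ with $\bigcap_{\varphi\in\Phi}[\![\varphi]\!]_{\mathcal{S}}=[\![\psi]\!]_{\mathcal{S}}$ (empty intersection $=\Sigma$). $\mathrm{AD}_{\mathcal{L}}$ is the abstract domain of $\wp(\Sigma)_\subseteq$ whose elements are the intersections of subfamilies of $\{[\![\varphi]\!]_{\mathcal{S}}\mid\varphi\in\mathcal{L}\}$,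 ordered by inclusion, with $\alpha(S)=\bigcap\{[\![\varphi]\!]_{\mathcal{S}}\mid S\subseteq[\![\varphi]\!]_{\mathcal{S}}\}$ and $\gamma$ the inclusion. An abstract semantic structure $(A,I^\sharp)$ on an abstract domain $A$ (Galois insertion $(\alpha,\wp(\Sigma),A,\gamma)$) assigns $I^\sharp(p)\in A$ and $I^\sharp(f):A^n\to A$ and induces $[\![\cdot]\!]_{\mathcal{S}^\sharp}:\mathcal{L}\to A$ compositionally; it is strongly preserving for $\mathcal{L}$ if for all $\varphi$, $S$: $\alpha(S)\le_A[\![\varphi]\!]_{\mathcal{S}^\sharp}\iff S\subseteq[\![\varphi]\!]_{\mathcal{S}}$. The best-correct-approximation interpretation is $I^A(p)=\alpha(\mathbf{p})$, $I^A(f)=\alpha\circ\mathbf{f}\circ(\gamma,\dots,\gamma)$. *)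

theory Defs
  imports Main
begin

datatype ('ap, 'op) form = Atom 'ap | App 'op "('ap, 'op) form list"

inductive wf_form :: "'ap set \<Rightarrow> 'op set \<Rightarrow> ('op \<Rightarrow> nat) \<Rightarrow> ('ap, 'op) form \<Rightarrow> bool"
  for AP Op ar where
  wf_atom: "p \<in> AP \<Longrightarrow> wf_form AP Op ar (Atom p)"
| wf_app: "f \<in> Op \<Longrightarrow> length xs = ar f \<Longrightarrow> (\<forall>x\<in>set xs. wf_form AP Op ar x)
            \<Longrightarrow> wf_form AP Op ar (App f xs)"

definition lang :: "'ap set \<Rightarrow> 'op set \<Rightarrow> ('op \<Rightarrow> nat) \<Rightarrow> ('ap, 'op) form set" where
  "lang AP Op ar = {\<phi>. wf_form AP Op ar \<phi>}"

text \<open>Compositional semantics induced by an interpretation of atoms and operators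
  (used both for concrete and abstract semantic structures; values are sets).\<close>
fun sem :: "('ap \<Rightarrow> 'v) \<Rightarrow> ('op \<Rightarrow> 'v list \<Rightarrow> 'v) \<Rightarrow> ('ap, 'op) form \<Rightarrow> 'v" where
  "sem Ia Io (Atom p) = Ia p"
| "sem Ia Io (App f xs) = Io f (map (sem Ia Io) xs)"

definition closed_inf_conj ::
  "('ap, 'op) form set \<Rightarrow> (('ap, 'op) form \<Rightarrow> 's set) \<Rightarrow> bool" where
  "closed_inf_conj L S \<longleftrightarrow> (\<forall>\<Phi> \<subseteq> L. \<exists>\<psi>\<in>L. (\<Inter>\<phi>\<in>\<Phi>. S \<phi>) = S \<psi>)"

definition AD :: "('ap, 'op) form set \<Rightarrow> (('ap, 'op) form \<Rightarrow> 's set) \<Rightarrow> 's set set" where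
  "AD L S = {\<Inter>F | F. F \<subseteq> S ` L}"

definition alpha_AD :: "('ap, 'op) form set \<Rightarrow> (('ap, 'op) form \<Rightarrow> 's set) \<Rightarrow> 's set \<Rightarrow> 's set" where
  "alpha_AD L S X = \<Inter>{S \<phi> | \<phi>. \<phi> \<in> L \<and> X \<subseteq> S \<phi>}"

end

theory Submission
  imports Defs
begin

lemma AD_eq:
  assumes "closed_inf_conj L S" shows "AD L S = S ` L"
proof
  show "S ` L \<subseteq> AD L S" unfolding AD_def
  proof
    fix x assume "x \<in> S ` L"
    then show "x \<in> {\<Inter>F | F. F \<subseteq> S ` L}" by (intro CollectI exI[of _ "{x}"]) auto
  qed
  show "AD L S \<subseteq> S ` L" unfolding AD_def
  proof
    fix x assume "x \<in> {\<Inter>F | F. F \<subseteq> S ` L}"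
    then obtain F where F: "F \<subseteq> S ` L" "x = \<Inter>F" by blast
    let ?P = "{\<phi>\<in>L. S \<phi> \<in> F}"
    have "(\<Inter>\<phi>\<in>?P. S \<phi>) = \<Inter>F" using F(1) by blast
    moreover obtain \<psi> where "\<psi>\<in>L" "(\<Inter>\<phi>\<in>?P. S \<phi>) = S \<psi>"
      using assms unfolding closed_inf_conj_def by (metis (no_types, lifting) mem_Collect_eq subsetI)
    ultimately show "x \<in> S ` L" using F by auto
  qed
qed

lemma alpha_id: "\<phi> \<in> L \<Longrightarrow> alpha_AD L S (S \<phi>) = S \<phi>"
  unfolding alpha_AD_def by blast

lemma sem_AD:
  assumes "wf_form AP Op ar \<phi>"
    and "\<forall>p\<in>AP. IAa p \<in> A"
    and "\<forall>f\<in>Op. \<forall>xs. length xs = ar f \<and> set xs \<subseteq> A \<longrightarrow> IAo f xs \<in> A"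
  shows "sem IAa IAo \<phi> \<in> A"
  using assms(1)
proof (induction rule: wf_form.induct)
  case (wf_atom p) then show ?case using assms(2) by simp
next
  case (wf_app f xs)
  then have "length (map (sem IAa IAo) xs) = ar f" "set (map (sem IAa IAo) xs) \<subseteq> A" by auto
  then show ?case using assms(3) wf_app(1) by simp
qed

theorem theorem5p5:
  fixes AP :: "'ap set" and Op :: "'op set" and ar :: "'op \<Rightarrow> nat"
    and Ia :: "'ap \<Rightarrow> 's set" and Io :: "'op \<Rightarrow> 's set list \<Rightarrow> 's set"
    and IAa :: "'ap \<Rightarrow> 's set" and IAo :: "'op \<Rightarrow> 's set list \<Rightarrow> 's set"
  assumes finOp: "finite Op"
    and arity: "\<forall>f\<in>Op. ar f \<ge> 1"
    and closed: "closed_inf_conj (lang AP Op ar) (sem Ia Io)"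
    and abs_atoms: "\<forall>p\<in>AP. IAa p \<in> AD (lang AP Op ar) (sem Ia Io)"
    and abs_ops: "\<forall>f\<in>Op. \<forall>xs. length xs = ar f \<and> set xs \<subseteq> AD (lang AP Op ar) (sem Ia Io)
                    \<longrightarrow> IAo f xs \<in> AD (lang AP Op ar) (sem Ia Io)"
    and strong: "\<forall>\<phi>\<in>lang AP Op ar. \<forall>S.
                   alpha_AD (lang AP Op ar) (sem Ia Io) S \<subseteq> sem IAa IAo \<phi> \<longleftrightarrow> S \<subseteq> sem Ia Io \<phi>"
  shows "(\<forall>p\<in>AP. IAa p = alpha_AD (lang AP Op ar) (sem Ia Io) (Ia p))
       \<and> (\<forall>f\<in>Op. \<forall>xs. length xs = ar f \<and> set xs \<subseteq> AD (lang AP Op ar) (sem Ia Io)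
            \<longrightarrow> IAo f xs = alpha_AD (lang AP Op ar) (sem Ia Io) (Io f xs))"
proof -
  let ?L = "lang AP Op ar" and ?S = "sem Ia Io" and ?T = "sem IAa IAo"
  have ADe: "AD ?L ?S = ?S ` ?L" using AD_eq[OF closed] .
  have eq: "?T \<phi> = ?S \<phi>" if "\<phi> \<in> ?L" for \<phi>
  proof
    have "?T \<phi> \<in> ?S ` ?L" using sem_AD[of AP Op ar \<phi> IAa "AD ?L ?S" IAo] that abs_atoms abs_ops ADe
      unfolding lang_def by auto
    then obtain \<chi> where "\<chi> \<in> ?L" "?T \<phi> = ?S \<chi>" by blast
    then have "alpha_AD ?L ?S (?T \<phi>) = ?T \<phi>" using alpha_id[OF \<open>\<chi> \<in> ?L\<close>, of ?S] by simp
    then show "?T \<phi> \<subseteq> ?S \<phi>" using strong[rule_format, OF that, of "?T \<phi>"] by simp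
  next
    have "alpha_AD ?L ?S (?S \<phi>) \<subseteq> ?T \<phi>" using strong[rule_format, OF that, of "?S \<phi>"] by blast
    then show "?S \<phi> \<subseteq> ?T \<phi>" unfolding alpha_id[OF that, of ?S] .
  qed
  have A: "\<forall>p\<in>AP. IAa p = alpha_AD ?L ?S (Ia p)"
  proof
    fix p assume p: "p \<in> AP"
    then have "Atom p \<in> ?L" unfolding lang_def by (auto intro: wf_atom)
    have "IAa p = ?T (Atom p)" by simp
    also have "\<dots> = ?S (Atom p)" using eq[OF \<open>Atom p \<in> ?L\<close>] .
    also have "\<dots> = alpha_AD ?L ?S (?S (Atom p))" using alpha_id[OF \<open>Atom p \<in> ?L\<close>, of ?S] by simp
    finally show "IAa p = alpha_AD ?L ?S (Ia p)" by simp
  qed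
  have B: "IAo f xs = alpha_AD ?L ?S (Io f xs)"
    if f: "f \<in> Op" and len: "length xs = ar f" and xsA: "set xs \<subseteq> AD ?L ?S" for f xs
  proof -
    define ps where "ps = map (\<lambda>x. SOME \<phi>. \<phi> \<in> ?L \<and> ?S \<phi> = x) xs"
    have pick: "(SOME \<phi>. \<phi> \<in> ?L \<and> ?S \<phi> = x) \<in> ?L \<and> ?S (SOME \<phi>. \<phi> \<in> ?L \<and> ?S \<phi> = x) = x"
      if "x \<in> set xs" for x
    proof -
      have "\<exists>\<phi>. \<phi> \<in> ?L \<and> ?S \<phi> = x" using that xsA ADe by auto
      then show ?thesis by (rule someI_ex)
    qed
    have psL: "\<forall>\<phi>\<in>set ps. \<phi> \<in> ?L" using pick unfolding ps_def by auto
    have mapS: "map ?S ps = xs" unfolding ps_def by (simp add: map_idI pick)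
    have mapT: "map ?T ps = xs" proof -
      have "map ?T ps = map ?S ps" using psL eq by (simp add: map_eq_conv)
      then show ?thesis using mapS by simp
    qed
    have appL: "App f ps \<in> ?L" using psL f len unfolding lang_def ps_def
      by (auto intro!: wf_app)
    have "IAo f xs = ?T (App f ps)" using mapT by simp
    also have "\<dots> = ?S (App f ps)" using eq appL by blast
    also have "\<dots> = Io f xs" using mapS by simp
    finally have "IAo f xs = Io f xs" .
    moreover have "alpha_AD ?L ?S (?S (App f ps)) = ?S (App f ps)" by (rule alpha_id[OF appL])
    ultimately show ?thesis using mapS by (simp only: sem.simps)
  qed
  show ?thesis using A B by (intro conjI ballI allI impI) auto
qed

end
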